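(* Let $\lambda, R, B>0$ and $d,n\geq 1$. Let $(x_1,y_1),\dots,(x_n,y_n)$ be an arbitrary sequence with $x_t\in\mathbb R^d$, $\|x_t\|\le R$ and $y_t\in\{-1,1\}$. Then the AIOLI forecaster run with regularization parameter $\lambda$ (defined in the context) satisfies, for every $\theta\in\mathbb R^d$ with $\|\theta\|\le B$, \[ R_n(\theta)\le \lambda\|\theta\|^2 + d(1+BR)\log\left(1+\frac{nR^2}{8d(1+BR)\lambda}\right). \] In particular, with $\lambda = 1/B^2$, for every $\theta$ with $\|\theta\|\le B$, \[ R_n(\theta)\le d(1+BR)\log\left(1+\frac{nB^2R^2}{8d(1+BR)}\right)+1 . \]
   Context: Online logistic regression: the logistic loss is $\ell(z,y)=\log(1+e^{-yz})$ for $z\in\mathbb R$, $y\in\{-1,1\}$, and $\ell_t(\theta)=\ell(\theta^\top x_t,y_t)$ for $\theta\in\mathbb R^d$. AIOLI with parameters $\lambda,R,B$ produces vectors $\hat\theta_1,\dots,\hat\theta_n\in\mathbb R^d$ recursively: at round $t$, having $\hat\theta_1,\dots,\hat\theta_{t-1}$, for each $s<t$ set $g_s=\nabla\ell_s(\hat\theta_s)$, $\eta_s = e^{y_s\hat\theta_s^\top x_s}/(1+BR)$, and the quadratic surrogate \[\hat\ell_s(\theta)=\ell_s(\hat\theta_s)+g_s^\top(\theta-\hat\theta_s)+\frac{\eta_s}{2}(\theta-\hat\theta_s)^\top g_sg_s^\top(\theta-\hat\theta_s).\] Then, after observing $x_t$ (but before $y_t$), \[\hat\theta_t=\arg\min_{\theta\in\mathbb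 R^d}\Big\{\sum_{s=1}^{t-1}\hat\ell_s(\theta)+\ell(\theta^\top x_t,1)+\ell(\theta^\top x_t,-1)+\lambda\|\theta\|^2\Big\},\] and the prediction is $\hat y_t=\hat\theta_t^\top x_t$; then $y_t$ is revealed. The regret against $\theta\in\mathbb R^d$ is $R_n(\theta)=\sum_{t=1}^n\ell_t(\hat\theta_t)-\sum_{t=1}^n\ell_t(\theta)$. *)

theory Defs
  imports "HOL-Analysis.Analysis"
begin

definition logloss :: "real \<Rightarrow> real \<Rightarrow> real" where
  "logloss z yv = ln (1 + exp (- yv * z))"

definition round_loss :: "(nat \<Rightarrow> real^'d) \<Rightarrow> (nat \<Rightarrow> real) \<Rightarrow> nat \<Rightarrow> real^'d \<Rightarrow> real" where
  "round_loss x y t th = logloss (th \<bullet> x t) (y t)"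

definition loss_grad :: "(nat \<Rightarrow> real^'d) \<Rightarrow> (nat \<Rightarrow> real) \<Rightarrow> nat \<Rightarrow> real^'d \<Rightarrow> real^'d" where
  "loss_grad x y s th = (- y s / (1 + exp (y s * (th \<bullet> x s)))) *\<^sub>R x s"

definition surrogate :: "real \<Rightarrow> real \<Rightarrow> (nat \<Rightarrow> real^'d) \<Rightarrow> (nat \<Rightarrow> real) \<Rightarrow> nat \<Rightarrow> real^'d \<Rightarrow> real^'d \<Rightarrow> real" where
  "surrogate R B x y s ths th =
     (let g = loss_grad x y s ths;
          eta = exp (y s * (ths \<bullet> x s)) / (1 + B * R)
      in round_loss x y s ths + g \<bullet> (th - ths) + eta / 2 * (g \<bullet> (th - ths))^2)"

text \<open>AIOLI objective at round \<open>t\<close> (1-indexed), given the list \<open>prev\<close> = [\<hat>\<theta>_1,...,\<hat>\<theta>_{t-1}].\<close>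
definition aioli_obj :: "real \<Rightarrow> real \<Rightarrow> real \<Rightarrow> (nat \<Rightarrow> real^'d) \<Rightarrow> (nat \<Rightarrow> real) \<Rightarrow> nat \<Rightarrow> (real^'d) list \<Rightarrow> real^'d \<Rightarrow> real" where
  "aioli_obj lam R B x y t prev th =
     (\<Sum>s=1..<t. surrogate R B x y s (prev ! (s - 1)) th)
     + logloss (th \<bullet> x t) 1 + logloss (th \<bullet> x t) (-1) + lam * (norm th)^2"

text \<open>The list [\<hat>\<theta>_1,...,\<hat>\<theta>_t] produced by AIOLI; \<hat>\<theta>_t is the (unique, for \<open>\<lambda> > 0\<close>) minimiser.\<close>
fun aioli_list :: "real \<Rightarrow> real \<Rightarrow> real \<Rightarrow> (nat \<Rightarrow> real^'d) \<Rightarrow> (nat \<Rightarrow> real) \<Rightarrow> nat \<Rightarrow> (real^'d) list" where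
  "aioli_list lam R B x y 0 = []"
| "aioli_list lam R B x y (Suc t) =
     (let prev = aioli_list lam R B x y t
      in prev @ [SOME th. \<forall>th'. aioli_obj lam R B x y (Suc t) prev th \<le> aioli_obj lam R B x y (Suc t) prev th'])"

definition aioli :: "real \<Rightarrow> real \<Rightarrow> real \<Rightarrow> (nat \<Rightarrow> real^'d) \<Rightarrow> (nat \<Rightarrow> real) \<Rightarrow> nat \<Rightarrow> real^'d" where
  "aioli lam R B x y t = aioli_list lam R B x y t ! (t - 1)"

definition regret :: "real \<Rightarrow> real \<Rightarrow> real \<Rightarrow> (nat \<Rightarrow> real^'d) \<Rightarrow> (nat \<Rightarrow> real) \<Rightarrow> nat \<Rightarrow> real^'d \<Rightarrow> real" where
  "regret lam R B x y n th =
     (\<Sum>t=1..n. round_loss x y t (aioli lam R B x y t)) - (\<Sum>t=1..n. round_loss x y t th)"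

end

theory Submission
  imports Defs
begin

definition outer :: "real^'n \<Rightarrow> real^'n \<Rightarrow> real^'n^'n" where
  "outer u v = (\<chi> i j. u$i * v$j)"

lemma rowI: "row i (mat 1 :: real^'n^'n) = axis i 1"
  by (simp add: row_def mat_def axis_def vec_eq_iff)

lemma det_row_repl_id:
  "det (\<chi> i. if i = k then v else row i (mat 1 :: real^'n^'n)) = v$k"
proof -
  have h: "(\<Sum>i\<in>UNIV. v $ i *s row i (mat 1 :: real^'n^'n)) = v"
    by (simp add: basis_expansion rowI)
  show ?thesis using cramer_lemma_transpose[of k v "mat 1 :: real^'n^'n"] unfolding h by simp
qed


lemma det_aux_C:
  fixes w v :: "real^'n"
  assumes "finite T"
  shows "k \<notin> T \<Longrightarrow> det (\<chi> i. if i = k then v else if i \<in> T then row i (mat 1 :: real^'n^'n) + w$i *s v else row i (mat 1)) = v$k"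
  using assms
proof (induction T rule: finite_induct)
  case empty
  have "(\<chi> i. if i = k then v else if i \<in> {} then row i (mat 1 :: real^'n^'n) + w$i *s v else row i (mat 1))
     = (\<chi> i. if i = k then v else row i (mat 1 :: real^'n^'n))"
    by (intro Cart_lambda_cong) simp
  then show ?case using det_row_repl_id[of k v] by simp
next
  case (insert j T)
  have jk: "j \<noteq> k" using insert by auto
  let ?c = "\<lambda>i. if i = k then v else if i \<in> T then row i (mat 1 :: real^'n^'n) + w$i *s v else row i (mat 1)"
  have eq: "(\<chi> i. if i = k then v else if i \<in> insert j T then row i (mat 1 :: real^'n^'n) + w$i *s v else row i (mat 1))
    = (\<chi> i. if i = j then row i (mat 1) + w$i *s v else ?c i)"
    using jk insert by (intro Cart_lambda_cong) auto
  have e1: "det (\<chi> i. if i = j then row i (mat 1) else ?c i) = v$k"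
  proof -
    have "(\<chi> i. if i = j then row i (mat 1) else ?c i) = (\<chi> i. ?c i)"
      using insert jk by (intro Cart_lambda_cong) auto
    then show ?thesis using insert by simp
  qed
  have e2: "det (\<chi> i. if i = j then w$i *s v else ?c i) = 0"
  proof -
    have "det (\<chi> i. if i = j then w$i *s v else ?c i) = w$j * det (\<chi> i. if i = j then v else ?c i)"
    proof -
      have "(\<chi> i. if i = j then w$i *s v else ?c i) = (\<chi> i. if i = j then w$j *s v else ?c i)"
        by (intro Cart_lambda_cong) auto
      then show ?thesis using det_row_mul[of j "w$j" "\<lambda>_. v" ?c] by simp
    qed
    moreover have "det (\<chi> i. if i = j then v else ?c i) = 0"
      by (rule det_identical_rows[OF jk]) (use jk in \<open>simp add: row_def\<close>)
    ultimately show ?thesis by simp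
  qed
  show ?case unfolding eq det_row_add[of j "\<lambda>i. row i (mat 1)" "\<lambda>i. w$i *s v" ?c] e1 e2 by simp
qed

lemma det_aux_P:
  fixes w v :: "real^'n"
  assumes "finite T"
  shows "det (\<chi> i. if i \<in> T then row i (mat 1 :: real^'n^'n) + w$i *s v else row i (mat 1)) = 1 + (\<Sum>i\<in>T. w$i * v$i)"
  using assms
proof (induction T rule: finite_induct)
  case empty
  have "(\<chi> i. row i (mat 1 :: real^'n^'n)) = mat 1" by (simp add: row_def vec_eq_iff)
  then show ?case by simp
next
  case (insert k T)
  let ?c = "\<lambda>i. if i \<in> T then row i (mat 1 :: real^'n^'n) + w$i *s v else row i (mat 1)"
  have eq: "(\<chi> i. if i \<in> insert k T then row i (mat 1 :: real^'n^'n) + w$i *s v else row i (mat 1))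
    = (\<chi> i. if i = k then row i (mat 1) + w$i *s v else ?c i)"
    by (intro Cart_lambda_cong) auto
  have e1: "det (\<chi> i. if i = k then row i (mat 1) else ?c i) = 1 + (\<Sum>i\<in>T. w$i * v$i)"
  proof -
    have "(\<chi> i. if i = k then row i (mat 1) else ?c i) = (\<chi> i. ?c i)"
      using insert by (intro Cart_lambda_cong) auto
    then show ?thesis using insert by simp
  qed
  have e2: "det (\<chi> i. if i = k then w$i *s v else ?c i) = w$k * v$k"
  proof -
    have "(\<chi> i. if i = k then w$i *s v else ?c i) = (\<chi> i. if i = k then w$k *s v else ?c i)"
      by (intro Cart_lambda_cong) auto
    then have "det (\<chi> i. if i = k then w$i *s v else ?c i) = w$k * det (\<chi> i. if i = k then v else ?c i)"
      using det_row_mul[of k "w$k" "\<lambda>_. v" ?c] by simp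
    also have "det (\<chi> i. if i = k then v else ?c i) = v$k"
      using det_aux_C[OF insert(1) insert(2), where w=w and v=v] by simp
    finally show ?thesis .
  qed
  show ?case unfolding eq det_row_add[of k "\<lambda>i. row i (mat 1)" "\<lambda>i. w$i *s v" ?c] e1 e2
    using insert by (simp add: algebra_simps)
qed

lemma det_id_outer: "det (mat 1 + outer w v) = 1 + v \<bullet> (w::real^'n)"
proof -
  have "mat 1 + outer w v = (\<chi> i. if i \<in> UNIV then row i (mat 1 :: real^'n^'n) + w$i *s v else row i (mat 1))"
    by (simp add: outer_def row_def vec_eq_iff)
  then show ?thesis using det_aux_P[of UNIV w v] by (simp add: inner_vec_def mult.commute)
qed

lemma outer_mult: "A ** outer u v = outer (A *v u) v"
  by (simp add: outer_def matrix_matrix_mult_def matrix_vector_mult_def vec_eq_iff sum_distrib_right mult.assoc)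

lemma matrix_inv_both:
  fixes A :: "real^'n^'n"
  assumes "invertible A"
  shows "A ** matrix_inv A = mat 1" "matrix_inv A ** A = mat 1"
proof -
  have "\<exists>A'. A ** A' = mat 1 \<and> A' ** A = mat 1" using assms unfolding invertible_def by blast
  from someI_ex[OF this] show "A ** matrix_inv A = mat 1" "matrix_inv A ** A = mat 1"
    unfolding matrix_inv_def by auto
qed

lemma det_rank_one:
  fixes A :: "real^'n^'n"
  assumes "invertible A"
  shows "det (A + outer u v) = det A * (1 + v \<bullet> (matrix_inv A *v u))"
proof -
  have "A + outer u v = A ** (mat 1 + outer (matrix_inv A *v u) v)"
    using assms by (simp add: matrix_add_ldistrib outer_mult matrix_vector_mul_assoc matrix_inv_both(1))
  then show ?thesis by (simp add: det_mul det_id_outer)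
qed

definition posdef :: "real^'n^'n \<Rightarrow> bool" where
  "posdef A \<longleftrightarrow> (\<forall>x. x \<noteq> 0 \<longrightarrow> 0 < x \<bullet> (A *v x))"

lemma outer_mv: "outer u v *v x = (v \<bullet> x) *\<^sub>R u"
  by (simp add: outer_def matrix_vector_mult_def vec_eq_iff inner_vec_def sum_distrib_left mult_ac)

lemma quad_outer: "x \<bullet> (outer u v *v x) = (u \<bullet> x) * (v \<bullet> x)"
  by (simp add: outer_mv inner_commute)

lemma symm_inner:
  assumes "transpose M = M"
  shows "u \<bullet> (M *v w) = (M *v u) \<bullet> (w::real^'n)"
proof -
  have "(M *v u) \<bullet> w = (transpose M *v u) \<bullet> w" using assms by simp
  also have "\<dots> = u \<bullet> (M *v w)" by (simp add: dot_lmul_matrix)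
  finally show ?thesis by simp
qed

lemma inv_mv:
  fixes M :: "real^'n^'n"
  assumes "invertible M"
  shows "M *v (matrix_inv M *v w) = w" "matrix_inv M *v (M *v w) = w"
  using matrix_inv_both[OF assms] by (simp_all add: matrix_vector_mul_assoc)

lemma inv_apply:
  fixes M :: "real^'n^'n"
  assumes "invertible M" "M *v z = w"
  shows "matrix_inv M *v w = z"
  using inv_mv(2)[OF assms(1), of z] assms(2) by simp

lemma posdef_invertible:
  fixes M :: "real^'n^'n"
  assumes "posdef M"
  shows "invertible M"
proof -
  have "inj ((*v) M)"
  proof (rule injI)
    fix a b assume "M *v a = M *v b"
    then have "M *v (a - b) = 0" by (simp add: matrix_vector_mult_diff_distrib)
    then have "(a - b) \<bullet> (M *v (a - b)) = 0" by simp
    then show "a = b" using assms unfolding posdef_def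
      by (metis less_irrefl right_minus_eq)
  qed
  then have "det (matrix ((*v) M)) \<noteq> 0"
    using det_nz_iff_inj[of "(*v) M"] by (simp add: matrix_vector_mul_linear)
  then show ?thesis by (simp add: invertible_det_nz)
qed

lemma inv_symm:
  fixes M :: "real^'n^'n"
  assumes "invertible M" "transpose M = M"
  shows "transpose (matrix_inv M) = matrix_inv M"
proof -
  have "transpose (matrix_inv M) ** M = mat 1"
    using matrix_inv_both(1)[OF assms(1)] assms(2)
    by (metis matrix_transpose_mul transpose_mat)
  then have "transpose (matrix_inv M) ** M ** matrix_inv M = matrix_inv M"
    by simp
  then show ?thesis using matrix_inv_both(1)[OF assms(1)] by (metis matrix_mul_assoc matrix_mul_rid)
qed

lemma posdef_inv_nonneg:
  fixes M :: "real^'n^'n"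
  assumes "posdef M" "transpose M = M"
  shows "0 \<le> b \<bullet> (matrix_inv M *v b)"
proof -
  let ?y = "matrix_inv M *v b"
  have i: "invertible M" using posdef_invertible[OF assms(1)] .
  have "b \<bullet> ?y = (M *v ?y) \<bullet> ?y" using inv_mv(1)[OF i] by simp
  also have "\<dots> = ?y \<bullet> (M *v ?y)" by (simp add: inner_commute)
  also have "\<dots> \<ge> 0" using assms(1) unfolding posdef_def
    by (cases "?y = 0") (auto intro: less_imp_le)
  finally show ?thesis .
qed

lemma cs_discr:
  fixes a b e :: real
  assumes "\<And>c. 0 \<le> a - 2 * b * c + c^2 * e" "0 \<le> e"
  shows "b^2 \<le> a * e"
proof (cases "e = 0")
  case True
  have "b = 0"
  proof (rule ccontr)
    assume "b \<noteq> 0"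
    have "0 \<le> a - 2 * b * ((a + 1) / (2 * b))" using assms(1)[of "(a+1)/(2*b)"] True by simp
    also have "\<dots> = -1" using \<open>b \<noteq> 0\<close> by (simp add: field_simps)
    finally show False by simp
  qed
  then show ?thesis using True by simp
next
  case False
  then have ep: "e > 0" using assms(2) by simp
  have "0 \<le> a - 2 * b * (b/e) + (b/e)^2 * e" using assms(1) .
  also have "\<dots> = (a * e - b^2) / e" using ep by (simp add: field_simps power2_eq_square)
  finally show ?thesis using ep by (simp add: zero_le_divide_iff)
qed

lemma cauchy_schwarz_form:
  fixes M :: "real^'n^'n"
  assumes "posdef M" "transpose M = M"
  shows "(x \<bullet> d)^2 \<le> (x \<bullet> (matrix_inv M *v x)) * (d \<bullet> (M *v d))"
proof -
  have i: "invertible M" using posdef_invertible[OF assms(1)] .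
  let ?z = "matrix_inv M *v x"
  have xz: "x = M *v ?z" using inv_mv(1)[OF i] by simp
  have psd: "\<And>u. 0 \<le> u \<bullet> (M *v u)" using assms(1) unfolding posdef_def
    by (metis inner_zero_left matrix_vector_mult_0_right order_le_less)
  have "\<And>c. 0 \<le> ?z \<bullet> (M *v ?z) - 2 * (?z \<bullet> (M *v d)) * c + c^2 * (d \<bullet> (M *v d))"
  proof -
    fix c
    have "0 \<le> (?z - c *\<^sub>R d) \<bullet> (M *v (?z - c *\<^sub>R d))" by (rule psd)
    also have "\<dots> = ?z \<bullet> (M *v ?z) - c * (?z \<bullet> (M *v d)) - c * (d \<bullet> (M *v ?z)) + c^2 * (d \<bullet> (M *v d))"
      by (simp add: algebra_simps inner_diff_left inner_diff_right power2_eq_square)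
    also have "d \<bullet> (M *v ?z) = ?z \<bullet> (M *v d)" using symm_inner[OF assms(2), of d ?z] by (simp add: inner_commute)
    finally show "0 \<le> ?z \<bullet> (M *v ?z) - 2 * (?z \<bullet> (M *v d)) * c + c^2 * (d \<bullet> (M *v d))" by (simp add: algebra_simps)
  qed
  from cs_discr[OF this psd] have "(?z \<bullet> (M *v d))^2 \<le> ?z \<bullet> (M *v ?z) * (d \<bullet> (M *v d))" .
  moreover have "x \<bullet> d = ?z \<bullet> (M *v d)" using xz symm_inner[OF assms(2), of ?z d] by simp
  moreover have "x \<bullet> ?z = ?z \<bullet> (M *v ?z)" using xz by (simp add: inner_commute)
  ultimately show ?thesis by simp
qed

lemma posdef_diag_pos:
  fixes P :: "real^'n^'n"
  assumes "posdef P"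
  shows "0 < P$i$i"
proof -
  have "axis i (1::real) \<noteq> 0" by (simp add: axis_eq_0_iff)
  then have "0 < axis i 1 \<bullet> (P *v axis i 1)" using assms unfolding posdef_def by blast
  then show ?thesis by (simp add: matrix_vector_mult_basis inner_axis' column_def)
qed

lemma hadamard_aux:
  fixes I :: "'n::finite set"
  assumes "finite I"
  shows "\<And>P::real^'n^'n. posdef P \<Longrightarrow> transpose P = P \<Longrightarrow>
     (\<forall>i j. i \<noteq> j \<and> (i \<notin> I \<or> j \<notin> I) \<longrightarrow> P$i$j = 0) \<Longrightarrow>
     0 < det P \<and> det P \<le> (\<Prod>i\<in>UNIV. P$i$i)"
  using assms
proof (induction I rule: finite_induct)
  case (empty P)
  then have d: "det P = (\<Prod>i\<in>UNIV. P$i$i)" by (intro det_diagonal) auto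
  have "0 < (\<Prod>i\<in>UNIV. P$i$i)" using posdef_diag_pos[OF empty(1)] by (simp add: prod_pos)
  then show ?case using d by simp
next
  case (insert k I P)
  have sym: "\<And>i j. P$i$j = P$j$i" using insert.prems(2) by (metis transpose_def vec_lambda_beta)
  define e :: "real^'n" where "e = axis k 1"
  define a where "a = P$k$k"
  define b :: "real^'n" where "b = (\<chi> i. if i = k then 0 else P$i$k)"
  define P' :: "real^'n^'n" where "P' = (\<chi> i j. if (i = k \<or> j = k) \<and> i \<noteq> j then 0 else P$i$j)"
  have apos: "0 < a" unfolding a_def using posdef_diag_pos[OF insert.prems(1)] .
  have f1: "P = P' + outer b e + outer e b"
  proof -
    { fix i j
      have "P$i$j = (P' + outer b e + outer e b)$i$j"
        using sym[of k j] by (auto simp: P'_def b_def e_def outer_def axis_def) }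
    then show ?thesis by (simp add: vec_eq_iff)
  qed
  have f2: "transpose P' = P'" unfolding P'_def
    using sym by (simp add: vec_eq_iff transpose_def)
  have f3: "\<forall>i j. i \<noteq> j \<and> (i \<notin> I \<or> j \<notin> I) \<longrightarrow> P'$i$j = 0"
    using insert.prems(3) unfolding P'_def by auto
  have f4: "\<And>i. P'$i$i = P$i$i" unfolding P'_def by simp
  have f5: "P' *v e = a *\<^sub>R e"
  proof -
    have "P' *v e = column k P'" unfolding e_def by (rule matrix_vector_mult_basis)
    also have "\<dots> = a *\<^sub>R e" by (simp add: column_def P'_def a_def e_def vec_eq_iff axis_def)
    finally show ?thesis .
  qed
  have eb: "e \<bullet> b = 0" "b \<bullet> e = 0" unfolding e_def b_def by (simp_all add: inner_axis' inner_axis)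
  have ee: "e \<bullet> e = 1" unfolding e_def by simp
  have psd: "\<And>u. 0 \<le> u \<bullet> (P *v u)" using insert.prems(1) unfolding posdef_def
    by (metis inner_zero_left matrix_vector_mult_0_right order_le_less)
  have f6: "posdef P'"
    unfolding posdef_def
  proof (intro allI impI)
    fix x :: "real^'n" assume x0: "x \<noteq> 0"
    define xt where "xt = x - (e \<bullet> x) *\<^sub>R e"
    have ext: "e \<bullet> xt = 0" unfolding xt_def by (simp add: inner_diff_right ee)
    have q1: "xt \<bullet> (P *v xt) = xt \<bullet> (P' *v xt)"
      unfolding f1 by (simp add: matrix_vector_mult_add_rdistrib inner_add_right quad_outer ext inner_commute)
    have "x = xt + (e \<bullet> x) *\<^sub>R e" unfolding xt_def by simp
    then have "x \<bullet> (P' *v x) = (xt + (e \<bullet> x) *\<^sub>R e) \<bullet> (P' *v (xt + (e \<bullet> x) *\<^sub>R e))" by simp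
    also have "\<dots> = xt \<bullet> (P' *v xt) + (e \<bullet> x) * (xt \<bullet> (P' *v e)) + (e \<bullet> x) * (e \<bullet> (P' *v xt)) + (e \<bullet> x)^2 * (e \<bullet> (P' *v e))"
      by (simp add: matrix_vector_right_distrib matrix_vector_mult_scaleR inner_add_left inner_add_right power2_eq_square algebra_simps)
    also have "e \<bullet> (P' *v xt) = xt \<bullet> (P' *v e)" using symm_inner[OF f2, of e xt] by (simp add: inner_commute)
    also have "xt \<bullet> (P' *v e) = 0" using f5 ext by (simp add: inner_commute)
    also have "e \<bullet> (P' *v e) = a" using f5 ee by simp
    finally have q2: "x \<bullet> (P' *v x) = xt \<bullet> (P *v xt) + (e \<bullet> x)^2 * a" using q1 by simp
    show "0 < x \<bullet> (P' *v x)"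
    proof (cases "xt = 0")
      case True
      then have "x = (e \<bullet> x) *\<^sub>R e" unfolding xt_def by simp
      then have "e \<bullet> x \<noteq> 0" using x0 by (metis scale_zero_left)
      then show ?thesis using q2 True apos by simp
    next
      case False
      then have "0 < xt \<bullet> (P *v xt)" using insert.prems(1) unfolding posdef_def by blast
      then show ?thesis using q2 apos by (simp add: add_pos_nonneg)
    qed
  qed
  from insert.IH[OF f6 f2 f3] have IH: "0 < det P' \<and> det P' \<le> (\<Prod>i\<in>UNIV. P$i$i)" using f4 by simp
  have i': "invertible P'" using posdef_invertible[OF f6] .
  define B' where "B' = matrix_inv P'"
  have B'sym: "transpose B' = B'" unfolding B'_def using inv_symm[OF i' f2] .
  have B'e: "B' *v e = (1/a) *\<^sub>R e"
    unfolding B'_def by (rule inv_apply[OF i']) (use apos f5 in \<open>simp add: matrix_vector_mult_scaleR\<close>)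
  define y where "y = B' *v b"
  have Py: "P' *v y = b" unfolding y_def B'_def using inv_mv(1)[OF i'] by simp
  have ey: "e \<bullet> y = 0"
  proof -
    have "e \<bullet> y = (B' *v e) \<bullet> b" unfolding y_def using symm_inner[OF B'sym] by simp
    then show ?thesis using B'e eb by simp
  qed
  define P'' where "P'' = P' + outer b e"
  have dP'': "det P'' = det P'"
    unfolding P''_def using det_rank_one[OF i', of b e] ey unfolding y_def B'_def by simp
  have i'': "invertible P''" using IH dP'' by (simp add: invertible_det_nz)
  define z where "z = (1/a) *\<^sub>R e - (1/a) *\<^sub>R y"
  have "P'' *v z = e"
  proof -
    have "P'' *v z = P' *v z + (e \<bullet> z) *\<^sub>R b"
      unfolding P''_def by (simp add: matrix_vector_mult_add_rdistrib outer_mv)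
    also have "P' *v z = e - (1/a) *\<^sub>R b"
      unfolding z_def using apos by (simp add: matrix_vector_mult_diff_distrib matrix_vector_mult_scaleR f5 Py)
    also have "e \<bullet> z = 1/a" unfolding z_def by (simp add: inner_diff_right ee ey)
    finally show ?thesis by simp
  qed
  then have zinv: "matrix_inv P'' *v e = z" by (rule inv_apply[OF i''])
  have Peq: "P = P'' + outer e b" unfolding P''_def using f1 by simp
  have dP: "det P = det P' * (1 - (b \<bullet> y) / a)"
    unfolding Peq using det_rank_one[OF i'', of e b] zinv dP''
    by (simp add: z_def inner_diff_right eb)
  have by0: "0 \<le> b \<bullet> y" unfolding y_def B'_def by (rule posdef_inv_nonneg[OF f6 f2])
  have pos: "0 < a - b \<bullet> y"
  proof -
    define x where "x = e - y"
    have ex: "e \<bullet> x = 1" unfolding x_def by (simp add: inner_diff_right ee ey)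
    then have "x \<noteq> 0" by auto
    then have "0 < x \<bullet> (P *v x)" using insert.prems(1) unfolding posdef_def by blast
    also have "x \<bullet> (P *v x) = x \<bullet> (P' *v x) + 2 * (b \<bullet> x) * (e \<bullet> x)"
      unfolding f1 by (simp add: matrix_vector_mult_add_rdistrib inner_add_right quad_outer algebra_simps)
    also have "P' *v x = a *\<^sub>R e - b" unfolding x_def by (simp add: matrix_vector_mult_diff_distrib f5 Py)
    also have "b \<bullet> x = - (b \<bullet> y)" unfolding x_def by (simp add: inner_diff_right eb)
    also have "x \<bullet> (a *\<^sub>R e - b) = a + b \<bullet> y"
      unfolding x_def by (simp add: inner_diff_left inner_diff_right ee eb ey inner_commute)
    finally show ?thesis using ex by simp
  qed
  have fpos: "0 < 1 - (b \<bullet> y) / a" using pos apos by (simp add: field_simps)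
  have fle: "1 - (b \<bullet> y) / a \<le> 1" using by0 apos by simp
  have "0 < det P" using dP IH fpos by simp
  moreover have "det P \<le> det P'" using dP IH fle fpos by (simp add: mult_left_le)
  ultimately show ?case using IH by simp
qed

lemma hadamard:
  fixes P :: "real^'n^'n"
  assumes "posdef P" "transpose P = P"
  shows "0 < det P" "det P \<le> (\<Prod>i\<in>UNIV. P$i$i)"
  using hadamard_aux[of UNIV P] assms by auto


lemma alg1:
  fixes E h K :: real
  assumes "E > 0" "K > 0"
  shows "1 / (1 + inverse E) * (0 + inverse E * - 1) -
    ((0 - 1) * (1 + E) - h * (0 + E * 1)) /
    ((1 + E) * (1 + E)) +
    ((E * 1 * h\<^sup>2 +
      real 2 * ((0 - 1) * h ^ (2 - Suc 0)) * E) *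
     (2 * K * (1 + E)\<^sup>2) -
     E * h\<^sup>2 *
     (0 * (1 + E)\<^sup>2 +
      real 2 * ((0 + E * 1) * (1 + E) ^ (2 - Suc 0)) * (2 * K))) /
    (2 * K * (1 + E)\<^sup>2 * (2 * K * (1 + E)\<^sup>2)) =
    E * h / (1 + E)\<^sup>2 *
    ((2 * (K - 1) * (1 + E) + h * (1 - E)) /
     (2 * K * (1 + E)))"
proof -
  define D where "D = 1 + E"
  have ED: "E = D - 1" unfolding D_def by simp
  have D0: "D \<noteq> 0" "D - 1 \<noteq> 0" "K \<noteq> 0" using assms unfolding D_def by auto
  have iv: "inverse (D - 1) = 1 / (D - 1)" by (simp add: field_simps)
  show ?thesis unfolding ED iv using D0 by (simp add: field_simps) algebra
qed
lemma pos1e[simp]: "0 < 1 + exp (z::real)" "1 + exp (z::real) \<noteq> 0"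
  using exp_gt_zero[of z] by linarith+

lemma logistic_deriv:
  fixes K w u :: real
  assumes "K > 0"
  shows "((\<lambda>u. ln (1 + exp (-u)) - (w - u) / (1 + exp u) + exp u * (w - u)^2 / (2 * K * (1 + exp u)^2))
     has_real_derivative (exp u * (w - u) / (1 + exp u)^2 * ((2 * (K - 1) * (1 + exp u) + (w - u) * (1 - exp u)) / (2 * K * (1 + exp u))))) (at u)"
  apply (rule derivative_eq_intros refl | (use assms in \<open>simp; fail\<close>))+
  using alg1[OF exp_gt_zero assms, of u "w - u"] by (simp add: exp_minus)

lemma logistic_c_nonneg:
  fixes K w u :: real
  assumes "K \<ge> 1" "\<bar>w\<bar> \<le> K - 1"
  shows "0 \<le> 2 * (K - 1) * (1 + exp u) + (w - u) * (1 - exp u)"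
proof -
  have a: "u * (1 - exp u) \<le> 0"
  proof (cases "u \<ge> 0")
    case True
    then have "1 \<le> exp u" by simp
    then show ?thesis using True by (simp add: mult_nonneg_nonpos)
  next
    case False
    then have "exp u \<le> 1" by simp
    then show ?thesis using False by (simp add: mult_nonpos_nonneg)
  qed
  have b: "- (w * (1 - exp u)) \<le> (K - 1) * (1 + exp u)"
  proof -
    have "- (w * (1 - exp u)) \<le> \<bar>w\<bar> * \<bar>1 - exp u\<bar>" by (simp add: abs_mult[symmetric])
    also have "\<bar>1 - exp u\<bar> \<le> 1 + exp u" using exp_gt_zero[of u] by linarith
    then have "\<bar>w\<bar> * \<bar>1 - exp u\<bar> \<le> \<bar>w\<bar> * (1 + exp u)" by (simp add: mult_left_mono)
    also have "\<dots> \<le> (K - 1) * (1 + exp u)" using assms(2) by (simp add: mult_right_mono less_imp_le)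
    finally show ?thesis .
  qed
  have c: "0 \<le> (K - 1) * (1 + exp u)" using assms(1) by (simp add: less_imp_le)
  have "(w - u) * (1 - exp u) = w * (1 - exp u) - u * (1 - exp u)" by (simp add: algebra_simps)
  then show ?thesis using a b c by linarith
qed

lemma logistic_lb:
  fixes K w wh :: real
  assumes K1: "K \<ge> 1" and wK: "\<bar>w\<bar> \<le> K - 1"
  shows "ln (1 + exp (-wh)) - (w - wh) / (1 + exp wh) + exp wh * (w - wh)^2 / (2 * K * (1 + exp wh)^2) \<le> ln (1 + exp (-w))"
proof -
  define S where "S = (\<lambda>u::real. ln (1 + exp (-u)) - (w - u) / (1 + exp u) + exp u * (w - u)^2 / (2 * K * (1 + exp u)^2))"
  define D where "D = (\<lambda>u::real. exp u * (w - u) / (1 + exp u)^2 * ((2 * (K - 1) * (1 + exp u) + (w - u) * (1 - exp u)) / (2 * K * (1 + exp u))))"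
  have Kp: "K > 0" using K1 by simp
  have der: "\<And>u. (S has_real_derivative D u) (at u)" unfolding S_def D_def by (rule logistic_deriv[OF Kp])
  have cn: "\<And>u. 0 \<le> (2 * (K - 1) * (1 + exp u) + (w - u) * (1 - exp u)) / (2 * K * (1 + exp u))"
    using logistic_c_nonneg[OF K1 wK] Kp by (simp add: divide_nonneg_pos)
  have Sw: "S w = ln (1 + exp (-w))" unfolding S_def by simp
  have "S wh \<le> S w"
  proof (cases "wh \<le> w")
    case True
    show ?thesis
    proof (rule DERIV_nonneg_imp_nondecreasing[OF True])
      fix x assume "wh \<le> x" "x \<le> w"
      then have "0 \<le> exp x * (w - x) / (1 + exp x)^2" by simp
      then have "0 \<le> D x" unfolding D_def using cn[of x] by (rule mult_nonneg_nonneg)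
      then show "\<exists>y. (S has_real_derivative y) (at x) \<and> 0 \<le> y" using der by blast
    qed
  next
    case False
    then have le: "w \<le> wh" by simp
    show ?thesis
    proof (rule DERIV_nonpos_imp_nonincreasing[OF le])
      fix x assume "w \<le> x" "x \<le> wh"
      then have "exp x * (w - x) / (1 + exp x)^2 \<le> 0"
        by (intro divide_nonpos_pos mult_nonneg_nonpos) auto
      then have "D x \<le> 0" unfolding D_def using cn[of x] by (rule mult_nonpos_nonneg)
      then show "\<exists>y. (S has_real_derivative y) (at x) \<and> y \<le> 0" using der by blast
    qed
  qed
  then show ?thesis using Sw unfolding S_def by simp
qed

lemma round_scalar:
  fixes r Q sg p K :: real
  assumes r0: "0 \<le> r" and Q0: "0 \<le> Q" and cs: "sg^2 \<le> r * Q" and p0: "0 < p" and p1: "p < 1" and K1: "K \<ge> 1"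
  shows "0 \<le> Q - (1 - p) * sg + p * (1 - p) * sg^2 / (2 * K) + (1 - 2 * p)^2 * r / 4
            + p * (1 - p) * r / (2 * (1 + p * (1 - p) * r / (2 * K)))"
proof -
  define q where "q = p * (1 - p)"
  define v where "v = q * r / (2 * K)"
  have q0: "0 < q" unfolding q_def using p0 p1 by simp
  have Kp: "0 < K" using K1 by simp
  have v0: "0 \<le> v" unfolding v_def using q0 r0 Kp by simp
  have t5: "0 \<le> p * (1 - p) * r / (2 * (1 + p * (1 - p) * r / (2 * K)))"
    using q0 r0 v0 unfolding q_def v_def by (simp add: divide_nonneg_pos add_pos_nonneg)
  show ?thesis
  proof (cases "r = 0")
    case True
    then have "sg = 0" using cs by simp
    then show ?thesis using True Q0 by simp
  next
    case False
    then have rp: "0 < r" using r0 by simp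
    define a where "a = (1 + v) / r"
    have ap: "0 < a" unfolding a_def using rp v0 by simp
    have a_eq: "a = 1 / r + q / (2 * K)" unfolding a_def v_def using rp Kp by (simp add: field_simps)
    have Qge: "sg^2 / r \<le> Q" using cs rp by (simp add: divide_le_eq mult.commute)
    have sq: "0 \<le> a * (sg - (1 - p) / (2 * a))^2" using ap by simp
    have sq2: "a * (sg - (1 - p) / (2 * a))^2 = a * sg^2 - (1 - p) * sg + (1 - p)^2 / (4 * a)"
      using ap by (simp add: field_simps power2_eq_square)
    have main1: "Q - (1 - p) * sg + q * sg^2 / (2 * K) \<ge> - ((1 - p)^2 / (4 * a))"
    proof -
      have "Q + q * sg^2 / (2 * K) \<ge> a * sg^2" unfolding a_eq using Qge by (simp add: algebra_simps add_divide_distrib)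
      then show ?thesis using sq sq2 by linarith
    qed
    have main2: "- ((1 - p)^2 / (4 * a)) + (1 - 2 * p)^2 * r / 4 + q * r / (2 * (1 + v)) \<ge> 0"
    proof -
      have e: "- ((1 - p)^2 / (4 * a)) + (1 - 2 * p)^2 * r / 4 + q * r / (2 * (1 + v))
          = r * (p^2 + (1 - 2 * p)^2 * v) / (4 * (1 + v))"
      proof -
        have nz: "1 + v \<noteq> 0" "r \<noteq> 0" using v0 rp by auto
        have h: "(1 - p)^2 / (4 * a) = (1 - p)^2 * r / (4 * (1 + v))" unfolding a_def using nz by (simp add: field_simps)
        define W where "W = 1 + v"
        have vW: "v = W - 1" unfolding W_def by simp
        have Wnz: "W \<noteq> 0" using nz(1) unfolding W_def .
        show ?thesis unfolding h q_def vW using Wnz by (simp add: field_simps) algebra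
      qed
      have "0 \<le> r * (p^2 + (1 - 2 * p)^2 * v) / (4 * (1 + v))"
        using rp v0 by (intro divide_nonneg_pos mult_nonneg_nonneg add_nonneg_nonneg) auto
      then show ?thesis using e by simp
    qed
    have "q * r / (2 * (1 + v)) = p * (1 - p) * r / (2 * (1 + p * (1 - p) * r / (2 * K)))"
      unfolding q_def v_def by simp
    then show ?thesis using main1 main2 unfolding q_def by linarith
  qed
qed

lemma frac_le_ln: "0 \<le> (v::real) \<Longrightarrow> v / (1 + v) \<le> ln (1 + v)"
proof -
  assume v: "0 \<le> v"
  have "ln (1 / (1 + v)) \<le> 1 / (1 + v) - 1" using v by (intro ln_le_minus_one) simp
  moreover have "ln (1 / (1 + v)) = - ln (1 + v)" using v by (simp add: ln_div)
  moreover have "1 / (1 + v) - 1 = - (v / (1 + v))" using v by (simp add: field_simps)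
  ultimately show ?thesis by linarith
qed


lemma aioli_list_len: "length (aioli_list lam R B x y t) = t"
  by (induction t) (simp_all add: Let_def)

lemma aioli_list_stable: "s < t \<Longrightarrow> aioli_list lam R B x y t ! s = aioli_list lam R B x y (Suc s) ! s"
proof (induction t)
  case 0 then show ?case by simp
next
  case (Suc t)
  show ?case
  proof (cases "s < t")
    case True
    then have "aioli_list lam R B x y (Suc t) ! s = aioli_list lam R B x y t ! s"
      by (simp add: Let_def nth_append aioli_list_len)
    then show ?thesis using Suc True by simp
  next
    case False
    then have "s = t" using Suc by simp
    then show ?thesis by simp
  qed
qed

lemma aioli_prev: "1 \<le> s \<Longrightarrow> s < t \<Longrightarrow> aioli_list lam R B x y (t - 1) ! (s - 1) = aioli lam R B x y s"
  unfolding aioli_def using aioli_list_stable[of "s - 1" "t - 1" lam R B x y] by simp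

lemma aioli_some: "1 \<le> t \<Longrightarrow> aioli lam R B x y t = (SOME th. \<forall>th'. aioli_obj lam R B x y t (aioli_list lam R B x y (t - 1)) th \<le> aioli_obj lam R B x y t (aioli_list lam R B x y (t - 1)) th')"
proof -
  assume "1 \<le> t"
  then obtain m where m: "t = Suc m" by (cases t) auto
  show ?thesis unfolding aioli_def m by (simp add: Let_def nth_append aioli_list_len)
qed

lemma sum_mv: "(sum M S) *v v = sum (\<lambda>s. M s *v v) S"
  by (induction S rule: infinite_finite_induct) (auto simp: matrix_vector_mult_add_rdistrib)

lemma exists_min:
  fixes F :: "real^'d \<Rightarrow> real"
  assumes cont: "continuous_on UNIV F" and lb: "\<And>th. c0 - a * norm th + lam * (norm th)^2 \<le> F th"
    and lam: "lam > 0" and a0: "a \<ge> 0"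
  shows "\<exists>th. \<forall>th'. F th \<le> F th'"
proof -
  define \<rho> where "\<rho> = max 1 ((a + \<bar>F 0 - c0\<bar> + 1) / lam)"
  have "compact (cball (0::real^'d) \<rho>)" by simp
  moreover have "cball (0::real^'d) \<rho> \<noteq> {}" unfolding \<rho>_def by simp
  moreover have "continuous_on (cball 0 \<rho>) F" using cont by (rule continuous_on_subset) simp
  ultimately obtain t where t: "t \<in> cball 0 \<rho>" "\<And>s. s \<in> cball 0 \<rho> \<Longrightarrow> F t \<le> F s"
    using continuous_attains_inf by metis
  have "F t \<le> F th" for th
  proof (cases "th \<in> cball 0 \<rho>")
    case True then show ?thesis using t by blast
  next
    case False
    then have nb: "norm th > \<rho>" by (simp add: dist_norm)
    then have n1: "norm th \<ge> 1" unfolding \<rho>_def by simp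
    have "lam * norm th > a + \<bar>F 0 - c0\<bar> + 1 - 1"
    proof -
      have "norm th > (a + \<bar>F 0 - c0\<bar> + 1) / lam" using nb unfolding \<rho>_def by simp
      then show ?thesis using lam by (simp add: field_simps)
    qed
    then have "lam * norm th - a \<ge> \<bar>F 0 - c0\<bar>" by simp
    then have "norm th * (lam * norm th - a) \<ge> 1 * \<bar>F 0 - c0\<bar>"
      using n1 by (intro mult_mono) auto
    then have "F th \<ge> c0 + \<bar>F 0 - c0\<bar>" using lb[of th] by (simp add: algebra_simps power2_eq_square)
    then have "F th \<ge> F 0" by simp
    moreover have "F t \<le> F 0" using t(2)[of 0] unfolding \<rho>_def by simp
    ultimately show ?thesis by simp
  qed
  then show ?thesis by blast
qed


locale actx =
  fixes lam R B :: real and n :: nat and x :: "nat \<Rightarrow> real^'d" and y :: "nat \<Rightarrow> real"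
  assumes lam_pos: "lam > 0" and R_pos: "R > 0" and B_pos: "B > 0"
    and x_bd: "\<forall>t\<in>{1..n}. norm (x t) \<le> R" and y_pm: "\<forall>t\<in>{1..n}. y t \<in> {-1, 1}"
begin

definition "K = 1 + B * R"
definition "th t = aioli lam R B x y t"
definition "g t = loss_grad x y t (th t)"
definition "eta t = exp (y t * (th t \<bullet> x t)) / K"
definition "Ls m v = (\<Sum>s=1..m. surrogate R B x y s (th s) v) + lam * (norm v)^2"
definition "G m v = (\<Sum>s=1..m. (1 + eta s * (g s \<bullet> (v - th s))) *\<^sub>R g s) + (2 * lam) *\<^sub>R v"
definition "Am m = lam *\<^sub>R mat 1 + (\<Sum>s=1..m. outer ((eta s / 2) *\<^sub>R g s) (g s))"
definition "hh z = logloss z 1 + logloss z (-1)"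

lemma K_ge1: "K \<ge> 1" unfolding K_def using B_pos R_pos by simp

lemma surr_eq: "surrogate R B x y s (th s) v = round_loss x y s (th s) + g s \<bullet> (v - th s) + eta s / 2 * (g s \<bullet> (v - th s))^2"
  unfolding surrogate_def g_def eta_def K_def by (simp add: Let_def)

lemma surr_expand: "surrogate R B x y s (th s) (v + d) = surrogate R B x y s (th s) v + (1 + eta s * (g s \<bullet> (v - th s))) * (g s \<bullet> d) + eta s / 2 * (g s \<bullet> d)^2"
proof -
  have "v + d - th s = (v - th s) + d" by simp
  then have e: "g s \<bullet> (v + d - th s) = g s \<bullet> (v - th s) + g s \<bullet> d" by (metis inner_add_right)
  show ?thesis unfolding surr_eq e by (simp add: algebra_simps power2_eq_square)
qed

lemma Am_entry: "Am m $ i $ j = lam * (if i = j then 1 else 0) + (\<Sum>s=1..m. eta s / 2 * (g s $ i) * (g s $ j))"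
  unfolding Am_def by (simp add: mat_def outer_def sum_component)

lemma Am_symm: "transpose (Am m) = Am m"
  by (simp add: vec_eq_iff transpose_def Am_entry mult_ac)

lemma mat1_mv: "(c *\<^sub>R mat 1) *v (d::real^'d) = c *\<^sub>R d"
proof -
  have "(c *\<^sub>R M) *v d = c *\<^sub>R (M *v d)" for M :: "real^'d^'d"
    by (simp add: vec_eq_iff matrix_vector_mult_def sum_distrib_left mult.assoc)
  then show ?thesis by simp
qed

lemma quad_Am: "d \<bullet> (Am m *v d) = lam * (norm d)^2 + (\<Sum>s=1..m. eta s / 2 * (g s \<bullet> d)^2)"
proof -
  have "d \<bullet> (Am m *v d) = lam * (d \<bullet> d) + (\<Sum>s=1..m. d \<bullet> (outer ((eta s / 2) *\<^sub>R g s) (g s) *v d))"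
    unfolding Am_def by (simp add: matrix_vector_mult_add_rdistrib sum_mv inner_add_right inner_sum_right mat1_mv)
  also have "d \<bullet> d = (norm d)^2" by (simp add: power2_norm_eq_inner)
  also have "(\<Sum>s=1..m. d \<bullet> (outer ((eta s / 2) *\<^sub>R g s) (g s) *v d)) = (\<Sum>s=1..m. eta s / 2 * (g s \<bullet> d)^2)"
    by (intro sum.cong refl) (simp add: quad_outer power2_eq_square inner_commute)
  finally show ?thesis .
qed

lemma Ls_expand: "Ls m (v + d) = Ls m v + G m v \<bullet> d + d \<bullet> (Am m *v d)"
proof -
  have n: "(norm (v + d))^2 = (norm v)^2 + 2 * (v \<bullet> d) + (norm d)^2"
    by (simp add: power2_norm_eq_inner inner_add_left inner_add_right inner_commute)
  have s: "(\<Sum>s=1..m. surrogate R B x y s (th s) (v + d)) = (\<Sum>s=1..m. surrogate R B x y s (th s) v)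
      + (\<Sum>s=1..m. (1 + eta s * (g s \<bullet> (v - th s))) * (g s \<bullet> d)) + (\<Sum>s=1..m. eta s / 2 * (g s \<bullet> d)^2)"
    unfolding surr_expand by (simp add: sum.distrib)
  have gd: "G m v \<bullet> d = (\<Sum>s=1..m. (1 + eta s * (g s \<bullet> (v - th s))) * (g s \<bullet> d)) + 2 * lam * (v \<bullet> d)"
    unfolding G_def by (simp add: inner_add_left inner_sum_left)
  show ?thesis unfolding Ls_def quad_Am n s gd by (simp add: algebra_simps)
qed

lemma eta_pos: "eta s > 0" unfolding eta_def using K_ge1 by simp

lemma Am_quad_ge: "d \<bullet> (Am m *v d) \<ge> lam * (norm d)^2"
proof -
  have "0 \<le> (\<Sum>s=1..m. eta s / 2 * (g s \<bullet> d)^2)"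
    using eta_pos by (intro sum_nonneg) (simp add: less_imp_le)
  then show ?thesis unfolding quad_Am by simp
qed

lemma Am_posdef: "posdef (Am m)"
  unfolding posdef_def
proof (intro allI impI)
  fix d :: "real^'d" assume "d \<noteq> 0"
  then have "0 < lam * (norm d)^2" using lam_pos by simp
  then show "0 < d \<bullet> (Am m *v d)" using Am_quad_ge[of d m] by simp
qed

end

lemma DERIV_hh: "((\<lambda>z. ln (1 + exp (- z)) + ln (1 + exp z)) has_real_derivative ((exp z - 1) / (exp z + 1))) (at (z::real))"
proof -
  have "((\<lambda>z. ln (1 + exp (- z)) + ln (1 + exp z)) has_real_derivative
     (exp (- z) * - 1 / (1 + exp (- z)) + exp z / (1 + exp z))) (at z)"
    by (rule derivative_eq_intros refl | simp)+
  moreover have "exp (- z) * - 1 / (1 + exp (- z)) + exp z / (1 + exp z) = (exp z - 1) / (exp z + 1)"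
  proof -
    have "exp (- z) * - 1 / (1 + exp (- z)) = - 1 / (1 + exp z)"
      by (simp add: exp_minus field_simps)
    then show ?thesis by (simp add: field_simps)
  qed
  ultimately show ?thesis by simp
qed

context actx
begin

lemma hh_alt: "hh z = ln (1 + exp (- z)) + ln (1 + exp z)"
  by (simp add: hh_def logloss_def)

definition "tau t = (exp (th t \<bullet> x t) - 1) / (exp (th t \<bullet> x t) + 1)"

lemma obj_eq:
  assumes "1 \<le> t"
  shows "aioli_obj lam R B x y t (aioli_list lam R B x y (t - 1)) v = Ls (t - 1) v + hh (v \<bullet> x t)"
proof -
  obtain m where m: "t = Suc m" using assms by (cases t) auto
  have "(\<Sum>s=1..<t. surrogate R B x y s (aioli_list lam R B x y (t - 1) ! (s - 1)) v)
      = (\<Sum>s=1..m. surrogate R B x y s (th s) v)"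
    unfolding m atLeastLessThanSuc_atLeastAtMost
    by (intro sum.cong refl) (simp add: th_def aioli_prev[of _ "Suc m", simplified])
  then show ?thesis unfolding aioli_obj_def Ls_def hh_def m by simp
qed

lemma hh_nonneg: "0 \<le> hh z"
  unfolding hh_alt by (intro add_nonneg_nonneg) simp_all

lemma Ls_form: "Ls m v = Ls m 0 + G m 0 \<bullet> v + v \<bullet> (Am m *v v)"
  using Ls_expand[of m 0 v] by simp

lemma Ls_cont: "continuous_on UNIV (Ls m)"
proof -
  have "continuous_on UNIV (\<lambda>v. Ls m 0 + G m 0 \<bullet> v + v \<bullet> (Am m *v v))"
    by (intro continuous_intros linear_continuous_on[OF matrix_vector_mul_bounded_linear])
  then show ?thesis using Ls_form by (metis (no_types, lifting) continuous_on_cong)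
qed

lemma th_min:
  assumes "1 \<le> t"
  shows "Ls (t - 1) (th t) + hh (th t \<bullet> x t) \<le> Ls (t - 1) v + hh (v \<bullet> x t)"
proof -
  let ?F = "\<lambda>v. aioli_obj lam R B x y t (aioli_list lam R B x y (t - 1)) v"
  have F: "?F v = Ls (t - 1) v + hh (v \<bullet> x t)" for v using obj_eq[OF assms] .
  have cont: "continuous_on UNIV ?F"
  proof -
    have "continuous_on UNIV (\<lambda>v. Ls (t - 1) v + (ln (1 + exp (- (v \<bullet> x t))) + ln (1 + exp (v \<bullet> x t))))"
      by (intro continuous_intros Ls_cont continuous_on_ln) (auto simp: add_pos_pos)
    then show ?thesis unfolding F hh_alt .
  qed
  have lb: "Ls (t - 1) 0 - norm (G (t - 1) 0) * norm v + lam * (norm v)^2 \<le> ?F v" for v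
  proof -
    have "- (norm (G (t - 1) 0) * norm v) \<le> G (t - 1) 0 \<bullet> v"
      using norm_cauchy_schwarz[of "- G (t - 1) 0" v] by simp
    then show ?thesis unfolding F using Ls_form[of "t - 1" v] Am_quad_ge[of v "t - 1"] hh_nonneg[of "v \<bullet> x t"] by linarith
  qed
  have "\<exists>th. \<forall>th'. ?F th \<le> ?F th'"
    by (rule exists_min[OF cont lb lam_pos]) simp
  from someI_ex[OF this] have "\<forall>th'. ?F (th t) \<le> ?F th'"
    unfolding th_def aioli_some[OF assms] .
  then show ?thesis unfolding F by blast
qed

lemma foc:
  assumes "1 \<le> t"
  shows "G (t - 1) (th t) = - tau t *\<^sub>R x t"
proof -
  let ?m = "t - 1" let ?v = "th t" let ?z = "th t \<bullet> x t"
  have orth: "(G ?m ?v + tau t *\<^sub>R x t) \<bullet> d = 0" for d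
  proof -
    define phi where "phi = (\<lambda>s::real. Ls ?m ?v + s * (G ?m ?v \<bullet> d) + s^2 * (d \<bullet> (Am ?m *v d))
       + (ln (1 + exp (- (?z + s * (d \<bullet> x t)))) + ln (1 + exp (?z + s * (d \<bullet> x t)))))"
    have phi_eq: "phi s = Ls ?m (?v + s *\<^sub>R d) + hh ((?v + s *\<^sub>R d) \<bullet> x t)" for s
    proof -
      have a: "(?v + s *\<^sub>R d) \<bullet> x t = ?z + s * (d \<bullet> x t)" by (simp add: inner_add_left)
      have b: "G ?m ?v \<bullet> (s *\<^sub>R d) = s * (G ?m ?v \<bullet> d)" by simp
      have c: "(s *\<^sub>R d) \<bullet> (Am ?m *v (s *\<^sub>R d)) = s^2 * (d \<bullet> (Am ?m *v d))"
        by (simp add: matrix_vector_mult_scaleR power2_eq_square)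
      show ?thesis unfolding phi_def Ls_expand hh_alt a b c by simp
    qed
    have min: "phi 0 \<le> phi s" for s
      unfolding phi_eq using th_min[OF assms, of "?v + s *\<^sub>R d"] by simp
    have hd: "((\<lambda>s. ln (1 + exp (- (?z + s * (d \<bullet> x t)))) + ln (1 + exp (?z + s * (d \<bullet> x t))))
        has_real_derivative ((exp (?z + 0 * (d \<bullet> x t)) - 1) / (exp (?z + 0 * (d \<bullet> x t)) + 1) * (d \<bullet> x t))) (at 0)"
    proof -
      have gd: "((\<lambda>s. ?z + s * (d \<bullet> x t)) has_real_derivative (d \<bullet> x t)) (at 0)"
        by (auto intro!: derivative_eq_intros)
      show ?thesis by (rule DERIV_chain2[OF DERIV_hh gd])
    qed
    have "(phi has_real_derivative (G ?m ?v \<bullet> d + (exp ?z - 1) / (exp ?z + 1) * (d \<bullet> x t))) (at 0)"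
      unfolding phi_def
      by (rule derivative_eq_intros refl hd | simp)+
    from DERIV_local_min[OF this zero_less_one] min
    have "G ?m ?v \<bullet> d + (exp ?z - 1) / (exp ?z + 1) * (d \<bullet> x t) = 0" by blast
    moreover have "(G ?m ?v + tau t *\<^sub>R x t) \<bullet> d = G ?m ?v \<bullet> d + tau t * (x t \<bullet> d)"
      by (simp add: inner_add_left)
    moreover have "x t \<bullet> d = d \<bullet> x t" by (rule inner_commute)
    ultimately show ?thesis unfolding tau_def by simp
  qed
  from orth[of "G ?m ?v + tau t *\<^sub>R x t"] have "G ?m ?v + tau t *\<^sub>R x t = 0" by simp
  then show ?thesis by (simp add: eq_neg_iff_add_eq_0)
qed

end

context actx
begin

definition "zh t = th t \<bullet> x t"
definition "p t = 1 / (1 + exp (y t * zh t))"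
definition "Binv m = matrix_inv (Am m)"
definition "r t = x t \<bullet> (Binv (t - 1) *v x t)"
definition "vv t = p t * (1 - p t) * r t / (2 * K)"
definition "T t = p t * (1 - p t) * r t / (2 * (1 + vv t))"
definition "bb t = Ls (t - 1) (th t) - (tau t)^2 * r t / 4"
definition "mu t = th t + (tau t / 2) *\<^sub>R (Binv (t - 1) *v x t)"

lemma y_cases: "t \<in> {1..n} \<Longrightarrow> y t = 1 \<or> y t = -1"
proof -
  assume "t \<in> {1..n}"
  then have "y t \<in> {-1, 1}" using y_pm by blast
  then show ?thesis by auto
qed

lemma y_sq: "t \<in> {1..n} \<Longrightarrow> (y t)^2 = 1"
  using y_cases by fastforce

lemma p_bounds: "0 < p t" "p t < 1"
  unfolding p_def by (simp_all add: add_pos_pos)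

lemma g_eq: "g t = (- y t * p t) *\<^sub>R x t"
  unfolding g_def loss_grad_def p_def zh_def by simp

lemma eta_p: "eta t * (p t)^2 = p t * (1 - p t) / K"
proof -
  have Kp: "K > 0" using K_ge1 by simp
  define E where "E = exp (y t * zh t)"
  have E0: "E > 0" unfolding E_def by simp
  have e1: "eta t = E / K" unfolding eta_def E_def zh_def by simp
  have e2: "p t = 1 / (1 + E)" unfolding p_def E_def by simp
  have "1 + E \<noteq> 0" using E0 by simp
  then show ?thesis unfolding e1 e2 using E0 Kp by (simp add: field_simps power2_eq_square)
qed

lemma tau_eq: "t \<in> {1..n} \<Longrightarrow> tau t = y t * (1 - 2 * p t)"
proof -
  assume t: "t \<in> {1..n}"
  then have "y t = 1 \<or> y t = -1" using y_pm by auto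
  then show ?thesis
  proof
    assume "y t = 1"
    then show ?thesis unfolding tau_def p_def zh_def by (simp add: field_simps)
  next
    assume y1: "y t = -1"
    have "(exp (zh t) - 1) / (exp (zh t) + 1) = - (1 - 2 / (1 + exp (- zh t)))"
      by (simp add: exp_minus field_simps)
    then show ?thesis unfolding tau_def p_def y1 zh_def by simp
  qed
qed

lemma Binv_props: "invertible (Am m)" "transpose (Binv m) = Binv m"
  "Am m *v (Binv m *v u) = u"
  using posdef_invertible[OF Am_posdef] inv_symm[OF posdef_invertible[OF Am_posdef] Am_symm] inv_mv(1)[OF posdef_invertible[OF Am_posdef]]
  unfolding Binv_def by auto

lemma r_nonneg: "0 \<le> r t"
  unfolding r_def Binv_def by (rule posdef_inv_nonneg[OF Am_posdef Am_symm])

lemma C1: "1 \<le> t \<Longrightarrow> Ls (t - 1) (mu t) = bb t"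
proof -
  assume t: "1 \<le> t"
  let ?m = "t - 1"
  let ?w = "Binv ?m *v x t"
  have "Ls ?m (mu t) = Ls ?m (th t) + G ?m (th t) \<bullet> ((tau t / 2) *\<^sub>R ?w) + ((tau t / 2) *\<^sub>R ?w) \<bullet> (Am ?m *v ((tau t / 2) *\<^sub>R ?w))"
    unfolding mu_def by (rule Ls_expand)
  also have "G ?m (th t) \<bullet> ((tau t / 2) *\<^sub>R ?w) = - ((tau t)^2 * r t / 2)"
    unfolding foc[OF t] r_def by (simp add: power2_eq_square)
  also have "((tau t / 2) *\<^sub>R ?w) \<bullet> (Am ?m *v ((tau t / 2) *\<^sub>R ?w)) = (tau t)^2 * r t / 4"
    unfolding r_def by (simp add: matrix_vector_mult_scaleR Binv_props(3) power2_eq_square inner_commute)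
  finally show ?thesis unfolding bb_def by simp
qed

lemma Ls_step: "1 \<le> t \<Longrightarrow> Ls t v = Ls (t - 1) v + surrogate R B x y t (th t) v"
proof -
  assume "1 \<le> t"
  then obtain m where m: "t = Suc m" by (cases t) auto
  show ?thesis unfolding Ls_def m by (simp add: sum.cl_ivl_Suc)
qed

lemma C3:
  assumes t: "t \<in> {1..n}"
  shows "bb t + round_loss x y t (th t) - T t \<le> Ls t v"
proof -
  have t1: "1 \<le> t" using t by simp
  let ?m = "t - 1"
  define d where "d = v - th t"
  define s where "s = x t \<bullet> d"
  define Q where "Q = d \<bullet> (Am ?m *v d)"
  have vd: "v = th t + d" unfolding d_def by simp
  have L1: "Ls ?m v = Ls ?m (th t) - tau t * s + Q"
    unfolding vd Ls_expand foc[OF t1] Q_def s_def by simp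
  have L2: "surrogate R B x y t (th t) v = round_loss x y t (th t) - y t * p t * s + eta t / 2 * (y t * p t * s)^2"
    unfolding surr_eq vd g_eq s_def by (simp add: power2_eq_square)
  have cs: "s^2 \<le> r t * Q"
    unfolding s_def Q_def r_def Binv_def using cauchy_schwarz_form[OF Am_posdef Am_symm, of "x t" d] by (simp add: mult.commute)
  have ys: "(y t)^2 = 1" using y_sq[OF t] .
  define sg where "sg = y t * s"
  have sg2: "sg^2 = s^2" unfolding sg_def using ys by (simp add: power_mult_distrib)
  have Q0: "0 \<le> Q"
  proof -
    have "0 \<le> lam * (norm d)^2" using lam_pos by simp
    then show ?thesis unfolding Q_def using Am_quad_ge[of d ?m] by linarith
  qed
  have key: "0 \<le> Q - (1 - p t) * sg + p t * (1 - p t) * sg^2 / (2 * K) + (1 - 2 * p t)^2 * r t / 4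
            + p t * (1 - p t) * r t / (2 * (1 + p t * (1 - p t) * r t / (2 * K)))"
    by (rule round_scalar[OF r_nonneg Q0 _ p_bounds K_ge1]) (use cs sg2 in simp)
  have e1: "tau t * s + y t * p t * s = (1 - p t) * sg"
    unfolding tau_eq[OF t] sg_def by (simp add: algebra_simps)
  have e2: "eta t / 2 * (y t * p t * s)^2 = p t * (1 - p t) * sg^2 / (2 * K)"
  proof -
    have "eta t / 2 * (y t * p t * s)^2 = (eta t * (p t)^2) * s^2 / 2"
      using ys by (simp add: power_mult_distrib)
    then show ?thesis unfolding eta_p sg2 by simp
  qed
  have e3: "(tau t)^2 = (1 - 2 * p t)^2" unfolding tau_eq[OF t] using ys by (simp add: power_mult_distrib)
  have e4: "T t = p t * (1 - p t) * r t / (2 * (1 + p t * (1 - p t) * r t / (2 * K)))"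
    unfolding T_def vv_def ..
  have "Ls t v = Ls ?m (th t) - tau t * s + Q + round_loss x y t (th t) - y t * p t * s + eta t / 2 * (y t * p t * s)^2"
    unfolding Ls_step[OF t1] L1 L2 by simp
  then have D: "Ls t v - (bb t + round_loss x y t (th t) - T t) = Q - (tau t * s + y t * p t * s) + eta t / 2 * (y t * p t * s)^2 + (tau t)^2 * r t / 4 + T t"
    unfolding bb_def by (simp add: algebra_simps)
  have "Ls t v - (bb t + round_loss x y t (th t) - T t) = Q - (1 - p t) * sg + p t * (1 - p t) * sg^2 / (2 * K) + (1 - 2 * p t)^2 * r t / 4
            + T t"
    unfolding D e1 e2 e3 ..
  then show ?thesis using key e4 by linarith
qed

lemma C4:
  assumes "t \<in> {1..n}" "Suc t \<le> n"
  shows "bb t + round_loss x y t (th t) - T t \<le> bb (Suc t)"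
proof -
  have "bb (Suc t) = Ls t (mu (Suc t))" using C1[of "Suc t"] by simp
  then show ?thesis using C3[OF assms(1)] by simp
qed

lemma C5: "0 \<le> bb 1"
proof -
  have "bb 1 = Ls 0 (mu 1)" using C1[of 1] by simp
  also have "\<dots> = lam * (norm (mu 1))^2" unfolding Ls_def by simp
  finally show ?thesis using lam_pos by simp
qed

lemma chain: "k \<in> {1..n} \<Longrightarrow> (\<Sum>t=1..<k. round_loss x y t (th t) - T t) \<le> bb k"
proof (induction k)
  case 0 then show ?case by simp
next
  case (Suc k)
  show ?case
  proof (cases "k = 0")
    case True then show ?thesis using C5 by simp
  next
    case False
    then have k: "k \<in> {1..n}" using Suc.prems by simp
    have "(\<Sum>t=1..<Suc k. round_loss x y t (th t) - T t) = (\<Sum>t=1..<k. round_loss x y t (th t) - T t) + (round_loss x y k (th k) - T k)"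
      using False by simp
    also have "\<dots> \<le> bb k + (round_loss x y k (th k) - T k)" using Suc.IH[OF k] by simp
    also have "\<dots> \<le> bb (Suc k)" using C4[OF k] Suc.prems by simp
    finally show ?thesis .
  qed
qed

lemma lower: "(\<Sum>t=1..n. round_loss x y t (th t) - T t) \<le> Ls n v"
proof (cases "n = 0")
  case True then show ?thesis unfolding Ls_def using lam_pos by simp
next
  case False
  then have n: "n \<in> {1..n}" by simp
  have "(\<Sum>t=1..n. round_loss x y t (th t) - T t) = (\<Sum>t=1..<n. round_loss x y t (th t) - T t) + (round_loss x y n (th n) - T n)"
  proof -
    obtain m where m: "n = Suc m" using False by (cases n) auto
    show ?thesis unfolding m atLeastLessThanSuc_atLeastAtMost by (simp add: sum.cl_ivl_Suc)
  qed
  also have "\<dots> \<le> bb n + (round_loss x y n (th n) - T n)" using chain[OF n] by simp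
  also have "\<dots> \<le> Ls n v" using C3[OF n, of v] by simp
  finally show ?thesis .
qed

lemma surr_le:
  assumes t: "t \<in> {1..n}" and v: "norm v \<le> B"
  shows "surrogate R B x y t (th t) v \<le> round_loss x y t v"
proof -
  define w where "w = y t * (v \<bullet> x t)"
  define wh where "wh = y t * zh t"
  have ys: "(y t)^2 = 1" using y_sq[OF t] .
  have yabs: "\<bar>y t\<bar> = 1" using y_cases[OF t] by auto
  have "\<bar>w\<bar> = \<bar>v \<bullet> x t\<bar>" unfolding w_def by (simp add: abs_mult yabs)
  also have "\<dots> \<le> norm v * norm (x t)" by (rule Cauchy_Schwarz_ineq2)
  also have "\<dots> \<le> B * R" using v x_bd t B_pos by (intro mult_mono) auto
  finally have wK: "\<bar>w\<bar> \<le> K - 1" unfolding K_def by simp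
  have gd: "g t \<bullet> (v - th t) = - (w - wh) / (1 + exp wh)"
  proof -
    have i: "x t \<bullet> (v - th t) = v \<bullet> x t - zh t" unfolding zh_def by (simp add: inner_diff_right inner_commute)
    have "g t \<bullet> (v - th t) = - y t * p t * (x t \<bullet> (v - th t))"
      unfolding g_eq by simp
    also have "\<dots> = - y t * p t * (v \<bullet> x t - zh t)" unfolding i ..
    also have "\<dots> = - p t * (w - wh)" unfolding w_def wh_def by (simp add: algebra_simps)
    also have "\<dots> = - (w - wh) / (1 + exp wh)" unfolding p_def wh_def by (simp add: field_simps)
    finally show ?thesis .
  qed
  have et: "eta t = exp wh / K" unfolding eta_def wh_def zh_def ..
  have rl: "round_loss x y t (th t) = ln (1 + exp (- wh))" unfolding round_loss_def logloss_def wh_def zh_def by simp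
  have rv: "round_loss x y t v = ln (1 + exp (- w))" unfolding round_loss_def logloss_def w_def by simp
  have "surrogate R B x y t (th t) v = ln (1 + exp (- wh)) - (w - wh) / (1 + exp wh) + exp wh * (w - wh)^2 / (2 * K * (1 + exp wh)^2)"
    unfolding surr_eq gd et rl by (simp add: power_divide field_simps power2_commute[of wh w])
  also have "\<dots> \<le> ln (1 + exp (- w))" by (rule logistic_lb[OF K_ge1 wK])
  finally show ?thesis unfolding rv .
qed

lemma upper: "norm v \<le> B \<Longrightarrow> Ls n v \<le> (\<Sum>t=1..n. round_loss x y t v) + lam * (norm v)^2"
proof -
  assume v: "norm v \<le> B"
  have "(\<Sum>s=1..n. surrogate R B x y s (th s) v) \<le> (\<Sum>t=1..n. round_loss x y t v)"
    by (rule sum_mono) (rule surr_le[OF _ v])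
  then show ?thesis unfolding Ls_def by simp
qed

lemma regret_T: "norm v \<le> B \<Longrightarrow> regret lam R B x y n v \<le> lam * (norm v)^2 + (\<Sum>t=1..n. T t)"
proof -
  assume v: "norm v \<le> B"
  have "(\<Sum>t=1..n. round_loss x y t (th t) - T t) \<le> (\<Sum>t=1..n. round_loss x y t v) + lam * (norm v)^2"
    using lower[of v] upper[OF v] by simp
  then show ?thesis unfolding regret_def th_def[symmetric] by (simp add: sum_subtractf)
qed

end

lemma amgm_ln:
  fixes a :: "'i \<Rightarrow> real"
  assumes fin: "finite I" and ne: "I \<noteq> {}" and pos: "\<And>i. i \<in> I \<Longrightarrow> 0 < a i"
  shows "(\<Sum>i\<in>I. ln (a i)) \<le> real (card I) * ln ((\<Sum>i\<in>I. a i) / real (card I))"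
proof -
  define c where "c = (\<Sum>i\<in>I. a i) / real (card I)"
  have cI: "real (card I) > 0" using fin ne by (simp add: card_gt_0_iff)
  have sp: "(\<Sum>i\<in>I. a i) > 0" using fin ne pos by (simp add: sum_pos)
  have c0: "c > 0" unfolding c_def using cI sp by simp
  have each: "ln (a i) \<le> ln c + a i / c - 1" if "i \<in> I" for i
  proof -
    have "ln (a i / c) \<le> a i / c - 1" using pos[OF that] c0 by (intro ln_le_minus_one) simp
    moreover have "ln (a i / c) = ln (a i) - ln c" using pos[OF that] c0 by (simp add: ln_div)
    ultimately show ?thesis by simp
  qed
  have "(\<Sum>i\<in>I. ln (a i)) \<le> (\<Sum>i\<in>I. ln c + a i / c - 1)" using each by (rule sum_mono)
  also have "\<dots> = real (card I) * ln c + (\<Sum>i\<in>I. a i) / c - real (card I)"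
    by (simp add: sum.distrib sum_subtractf sum_divide_distrib)
  also have "(\<Sum>i\<in>I. a i) / c = real (card I)" unfolding c_def using cI sp by simp
  finally show ?thesis unfolding c_def by simp
qed

context actx
begin

lemma T_le: "t \<in> {1..n} \<Longrightarrow> T t \<le> K * ln (1 + vv t)"
proof -
  assume t: "t \<in> {1..n}"
  have Kp: "K > 0" using K_ge1 by simp
  have v0: "0 \<le> vv t" unfolding vv_def using p_bounds[of t] r_nonneg[of t] Kp by simp
  define a where "a = p t * (1 - p t) * r t"
  have vva: "vv t = a / (2 * K)" unfolding vv_def a_def ..
  have "T t = a / (2 * (1 + vv t))" unfolding T_def a_def ..
  also have "\<dots> = K * (vv t / (1 + vv t))"
  proof -
    have "1 + vv t \<noteq> 0" using v0 by simp
    then show ?thesis unfolding vva using Kp by (simp add: field_simps)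
  qed
  also have "\<dots> \<le> K * ln (1 + vv t)" by (rule mult_left_mono[OF frac_le_ln[OF v0]]) (use Kp in simp)
  finally show ?thesis .
qed

lemma Am_step: "Am (Suc m) = Am m + outer ((eta (Suc m) / 2) *\<^sub>R g (Suc m)) (g (Suc m))"
  unfolding Am_def by (simp add: sum.cl_ivl_Suc algebra_simps)

lemma det_pos: "0 < det (Am m)" using hadamard(1)[OF Am_posdef Am_symm] .

lemma det_step:
  assumes t: "t \<in> {1..n}"
  shows "det (Am t) = det (Am (t - 1)) * (1 + vv t)"
proof -
  obtain m where m: "t = Suc m" using t by (cases t) auto
  have "det (Am t) = det (Am m) * (1 + g t \<bullet> (Binv m *v ((eta t / 2) *\<^sub>R g t)))"
    unfolding m Am_step Binv_def by (rule det_rank_one[OF Binv_props(1)])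
  also have "g t \<bullet> (Binv m *v ((eta t / 2) *\<^sub>R g t)) = (eta t / 2) * (y t)^2 * (p t)^2 * r t"
  proof -
    define c where "c = - y t * p t"
    have "g t \<bullet> (Binv m *v ((eta t / 2) *\<^sub>R g t)) = (c *\<^sub>R x t) \<bullet> (Binv m *v ((eta t / 2 * c) *\<^sub>R x t))"
      unfolding g_eq c_def by simp
    also have "\<dots> = c * (eta t / 2 * c) * (x t \<bullet> (Binv m *v x t))"
      by (simp add: matrix_vector_mult_scaleR)
    also have "\<dots> = (eta t / 2) * (y t)^2 * (p t)^2 * r t"
      unfolding c_def r_def m by (simp add: power2_eq_square)
    finally show ?thesis .
  qed
  also have "\<dots> = vv t" unfolding vv_def y_sq[OF t] using eta_p[of t] by (simp add: field_simps)
  finally show ?thesis unfolding m by simp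
qed

lemma ln_det_sum: "k \<le> n \<Longrightarrow> ln (det (Am k)) = ln (det (Am 0)) + (\<Sum>t=1..k. ln (1 + vv t))"
proof (induction k)
  case 0 then show ?case by simp
next
  case (Suc k)
  have t: "Suc k \<in> {1..n}" using Suc.prems by simp
  have v0: "0 \<le> vv (Suc k)" unfolding vv_def using p_bounds[of "Suc k"] r_nonneg[of "Suc k"] K_ge1 by simp
  have "ln (det (Am (Suc k))) = ln (det (Am k)) + ln (1 + vv (Suc k))"
    using det_step[OF t] det_pos[of k] v0 by (simp add: ln_mult)
  then show ?case using Suc by (simp add: sum.cl_ivl_Suc)
qed

lemma det_Am0: "det (Am 0) = lam ^ CARD('d)"
proof -
  have "det (Am 0) = (\<Prod>i\<in>UNIV. Am 0 $ i $ i)" by (rule det_diagonal) (simp add: Am_entry)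
  also have "\<dots> = (\<Prod>i\<in>(UNIV::'d set). lam)" by (simp add: Am_entry)
  also have "\<dots> = lam ^ CARD('d)" by simp
  finally show ?thesis .
qed

lemma diag_sum: "(\<Sum>i\<in>UNIV. Am m $ i $ i) = real CARD('d) * lam + (\<Sum>s=1..m. eta s / 2 * (norm (g s))^2)"
proof -
  have "(\<Sum>i\<in>UNIV. Am m $ i $ i) = (\<Sum>i\<in>(UNIV::'d set). lam) + (\<Sum>i\<in>UNIV. \<Sum>s=1..m. eta s / 2 * (g s $ i) * (g s $ i))"
    by (simp add: Am_entry sum.distrib)
  also have "(\<Sum>i\<in>UNIV. \<Sum>s=1..m. eta s / 2 * (g s $ i) * (g s $ i)) = (\<Sum>s=1..m. eta s / 2 * (\<Sum>i\<in>UNIV. (g s $ i) * (g s $ i)))"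
    by (subst sum.swap) (simp add: sum_distrib_left mult.assoc)
  also have "\<dots> = (\<Sum>s=1..m. eta s / 2 * (norm (g s))^2)"
    by (simp add: power2_norm_eq_inner inner_vec_def)
  finally show ?thesis by simp
qed

lemma g_term: "s \<in> {1..n} \<Longrightarrow> eta s / 2 * (norm (g s))^2 \<le> R^2 / (8 * K)"
proof -
  assume s: "s \<in> {1..n}"
  have Kp: "K > 0" using K_ge1 by simp
  have "(norm (g s))^2 = (p s)^2 * (norm (x s))^2"
    unfolding g_eq using y_sq[OF s] by (simp add: power_mult_distrib abs_mult)
  then have "eta s / 2 * (norm (g s))^2 = p s * (1 - p s) / K * (norm (x s))^2 / 2"
    using eta_p[of s] by (simp add: field_simps)
  also have "\<dots> \<le> (1/4) / K * R^2 / 2"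
  proof -
    have q: "p s * (1 - p s) \<le> 1/4"
    proof -
      have "0 \<le> (2 * p s - 1)^2" by simp
      then show ?thesis by (simp add: power2_eq_square algebra_simps)
    qed
    have q0: "0 \<le> p s * (1 - p s)" using p_bounds[of s] by simp
    have xr: "(norm (x s))^2 \<le> R^2" using x_bd s by (intro power_mono) auto
    have "p s * (1 - p s) / K * (norm (x s))^2 \<le> (1/4) / K * R^2"
      using q q0 xr Kp by (intro mult_mono divide_right_mono) auto
    then show ?thesis by simp
  qed
  also have "\<dots> = R^2 / (8 * K)" by simp
  finally show ?thesis .
qed

lemma sumT_bound:
  "(\<Sum>t=1..n. T t) \<le> real CARD('d) * K * ln (1 + real n * R^2 / (8 * real CARD('d) * K * lam))"
proof -
  define d where "d = real CARD('d)"
  have d0: "d > 0" unfolding d_def by simp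
  have Kp: "K > 0" using K_ge1 by simp
  have "(\<Sum>t=1..n. T t) \<le> (\<Sum>t=1..n. K * ln (1 + vv t))" by (rule sum_mono) (rule T_le)
  also have "\<dots> = K * (\<Sum>t=1..n. ln (1 + vv t))" by (simp add: sum_distrib_left)
  also have "(\<Sum>t=1..n. ln (1 + vv t)) = ln (det (Am n)) - d * ln lam"
    using ln_det_sum[of n] det_Am0 lam_pos unfolding d_def by (simp add: ln_realpow)
  also have "ln (det (Am n)) \<le> d * ln (lam + real n * R^2 / (8 * K * d))"
  proof -
    have dpos: "\<And>i. 0 < Am n $ i $ i" by (rule posdef_diag_pos[OF Am_posdef])
    have "ln (det (Am n)) \<le> ln (\<Prod>i\<in>UNIV. Am n $ i $ i)"
      using hadamard[OF Am_posdef Am_symm] dpos by (simp add: prod_pos)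
    also have "\<dots> = (\<Sum>i\<in>UNIV. ln (Am n $ i $ i))" by (rule ln_prod) (use dpos in \<open>auto simp: less_imp_neq[symmetric]\<close>)
    also have "\<dots> \<le> d * ln ((\<Sum>i\<in>UNIV. Am n $ i $ i) / d)"
      using amgm_ln[of UNIV "\<lambda>i. Am n $ i $ i"] dpos unfolding d_def by simp
    also have "\<dots> \<le> d * ln (lam + real n * R^2 / (8 * K * d))"
    proof -
      have "(\<Sum>s=1..n. eta s / 2 * (norm (g s))^2) \<le> (\<Sum>s=1..n. R^2 / (8 * K))" by (rule sum_mono) (rule g_term)
      then have "(\<Sum>i\<in>UNIV. Am n $ i $ i) \<le> d * lam + real n * R^2 / (8 * K)"
        unfolding diag_sum d_def by simp
      then have le: "(\<Sum>i\<in>UNIV. Am n $ i $ i) / d \<le> lam + real n * R^2 / (8 * K * d)"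
        using d0 by (simp add: divide_le_eq field_simps)
      have p: "0 < (\<Sum>i\<in>UNIV. Am n $ i $ i) / d" using dpos d0 by (simp add: sum_pos)
      show ?thesis using le p d0 by (simp add: mult_left_mono)
    qed
    finally show ?thesis .
  qed
  also have "d * ln (lam + real n * R^2 / (8 * K * d)) - d * ln lam = d * ln (1 + real n * R^2 / (8 * d * K * lam))"
  proof -
    have a: "lam + real n * R^2 / (8 * K * d) = lam * (1 + real n * R^2 / (8 * d * K * lam))"
      using lam_pos d0 Kp by (simp add: field_simps)
    have b: "0 < 1 + real n * R^2 / (8 * d * K * lam)" using lam_pos d0 Kp by (simp add: add_pos_nonneg)
    have c: "ln (lam + real n * R^2 / (8 * K * d)) = ln lam + ln (1 + real n * R^2 / (8 * d * K * lam))"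
      unfolding a by (rule ln_mult_pos[OF lam_pos b])
    show ?thesis unfolding c by (simp add: algebra_simps)
  qed
  finally show ?thesis using Kp unfolding d_def by (simp add: mult_left_mono algebra_simps)
qed

end

context actx
begin
lemma main_bound:
  assumes "norm v \<le> B"
  shows "regret lam R B x y n v \<le> lam * (norm v)^2 + real CARD('d) * (1 + B * R)
                 * ln (1 + real n * R^2 / (8 * real CARD('d) * (1 + B * R) * lam))"
  using regret_T[OF assms] sumT_bound unfolding K_def by linarith
end

theorem theorem1:
  fixes lam R B :: real and n :: nat
    and x :: "nat \<Rightarrow> real^'d" and y :: "nat \<Rightarrow> real"
  assumes "lam > 0" "R > 0" "B > 0" "n \<ge> 1"
    and "\<forall>t\<in>{1..n}. norm (x t) \<le> R"
    and "\<forall>t\<in>{1..n}. y t \<in> {-1, 1}"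
  shows "(\<forall>th :: real^'d. norm th \<le> B \<longrightarrow>
           regret lam R B x y n th
             \<le> lam * (norm th)^2 + real CARD('d) * (1 + B * R)
                 * ln (1 + real n * R^2 / (8 * real CARD('d) * (1 + B * R) * lam)))
         \<and> (\<forall>th :: real^'d. norm th \<le> B \<longrightarrow>
           regret (1 / B^2) R B x y n th
             \<le> real CARD('d) * (1 + B * R)
                 * ln (1 + real n * B^2 * R^2 / (8 * real CARD('d) * (1 + B * R))) + 1)"
proof
  interpret a1: actx lam R B n x y using assms by unfold_locales auto
  show "\<forall>th :: real^'d. norm th \<le> B \<longrightarrow>
           regret lam R B x y n th
             \<le> lam * (norm th)^2 + real CARD('d) * (1 + B * R)
                 * ln (1 + real n * R^2 / (8 * real CARD('d) * (1 + B * R) * lam))"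
    using a1.main_bound by blast
next
  have Bp: "1 / B^2 > 0" using assms(3) by simp
  interpret a2: actx "1 / B^2" R B n x y using assms Bp by unfold_locales auto
  show "\<forall>th :: real^'d. norm th \<le> B \<longrightarrow>
           regret (1 / B^2) R B x y n th
             \<le> real CARD('d) * (1 + B * R)
                 * ln (1 + real n * B^2 * R^2 / (8 * real CARD('d) * (1 + B * R))) + 1"
  proof (intro allI impI)
    fix th :: "real^'d" assume th: "norm th \<le> B"
    have e: "real n * R^2 / (8 * real CARD('d) * (1 + B * R) * (1 / B^2)) = real n * B^2 * R^2 / (8 * real CARD('d) * (1 + B * R))"
      using assms(3) by (simp add: field_simps)
    have q: "1 / B^2 * (norm th)^2 \<le> 1"
    proof -
      have "(norm th)^2 \<le> B^2" using th by (intro power_mono) auto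
      then show ?thesis using assms(3) by (simp add: divide_le_eq)
    qed
    show "regret (1 / B^2) R B x y n th
             \<le> real CARD('d) * (1 + B * R)
                 * ln (1 + real n * B^2 * R^2 / (8 * real CARD('d) * (1 + B * R))) + 1"
      using a2.main_bound[OF th] q unfolding e by linarith
  qed
qed


end
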